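(* Let $IS\in\{\Box,\blacksquare\}^2$. There is no correct compositional translation from $\mathrm{SYNCSIMPLE}$ into $\mathrm{LOCKSIMPLE}_{2,IS}$ of blocking type $(P_1,P_2)$.
   Context: $\mathrm{SYNCSIMPLE}$: subprocesses $\mathcal{U} ::= \checkmark \mid 0 \mid\, !\mathcal{U} \mid\, ?\mathcal{U}$; processes are finite parallel compositions ($\mid$ associative, commutative, $0$ a unit). Reduction: $!\mathcal{U}_1\mid ?\mathcal{U}_2\mid \mathcal{P}\to \mathcal{U}_1\mid\mathcal{U}_2\mid\mathcal{P}$. Successful: of form $\checkmark\mid\mathcal{P}$; may-convergent: reduces to a successful process; must-convergent: every reachable process is may-convergent. $\mathrm{LOCKSIMPLE}_{k,IS}$ ($IS\in\{\Box,\blacksquare\}^k$, $\Box$ empty, $\blacksquare$ full): subprocesses are words over $\{P_1,T_1,\dots,P_k,T_k\}$ followed by $0$ or $\checkmark$; states $(\mathcal{P},C)$ reduce by $(P_i\mathcal{U}\mid\mathcal{P},C)\to(\mathcal{U}\mid\mathcal{P},C[C_i:=\blacksquare])$ only if $C_i=\Box$, and $(T_i\mathcal{U}\mid\mathcal{P},C)\to(\mathcal{U}\mid\mathcal{P},C[C_i:=\Box])$ always. Success = process contains $\checkmark$; a process $\mathcal{P}$ is may/must-convergent iff the state $(\mathcal{P},IS)$ is. A compositional translation $\tau$ is given by words $\tau(!),\tau(?)$ with $\tau(0)=0$, $\tau(\checkmark)=\checkmark$, $\tau(!\mathcal{U})=\tau(!)\tau(\mathcal{U})$, $\tau(?\mathcal{U})=\tau(?)\tau(\mathcal{U})$,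 $\tau$ commuting with $\mid$; correct = preserves and reflects may- and must-convergence. Blocking type: for a word $S$, run $S$ as a single subprocess from $IS$; if it gets stuck at an occurrence of $P_i$ which is the first symbol from $\{P_i,T_i\}$ in $S$, the blocking type of $S$ is $P_i$; if it gets stuck at a later occurrence of $P_i$ the type is $P_iP_i$. $\tau$ has blocking type $(W_1,W_2)$ if $\tau(!)$ has type $W_1$ and $\tau(?)$ type $W_2$. *)

theory Defs
  imports Main "HOL-Library.Multiset"
begin

datatype ssub = SCheck | SZero | SSend ssub | SRecv ssub

type_synonym sproc = "ssub multiset"  (* finite parallel composition *)

inductive sync_step :: "sproc \<Rightarrow> sproc \<Rightarrow> bool" where
  "sync_step (add_mset (SSend u1) (add_mset (SRecv u2) P)) (add_mset u1 (add_mset u2 P))"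

definition sync_successful :: "sproc \<Rightarrow> bool" where
  "sync_successful P \<longleftrightarrow> SCheck \<in># P"

definition sync_may :: "sproc \<Rightarrow> bool" where
  "sync_may P \<longleftrightarrow> (\<exists>Q. sync_step\<^sup>*\<^sup>* P Q \<and> sync_successful Q)"

definition sync_must :: "sproc \<Rightarrow> bool" where
  "sync_must P \<longleftrightarrow> (\<forall>Q. sync_step\<^sup>*\<^sup>* P Q \<longrightarrow> sync_may Q)"

text \<open>Lock operations P_i and T_i, with indices i in 1..k.
  Lock configurations are lists of length k; entry i-1 describes lock i;
  True = full (filled square), False = empty (empty square).\<close>

datatype lact = LP nat | LT nat

fun lidx :: "lact \<Rightarrow> nat" where
  "lidx (LP i) = i" | "lidx (LT i) = i"

definition valid_word :: "nat \<Rightarrow> lact list \<Rightarrow> bool" where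
  "valid_word k w \<longleftrightarrow> (\<forall>a\<in>set w. 1 \<le> lidx a \<and> lidx a \<le> k)"

datatype lend = LZero | LCheck

type_synonym lsub = "lact list \<times> lend"
type_synonym lproc = "lsub multiset"
type_synonym lstate = "lproc \<times> bool list"

inductive lock_step :: "lstate \<Rightarrow> lstate \<Rightarrow> bool" where
  lock_P: "\<not> C ! (i - 1) \<Longrightarrow>
     lock_step (add_mset (LP i # w, e) M, C) (add_mset (w, e) M, C[i - 1 := True])"
| lock_T: "lock_step (add_mset (LT i # w, e) M, C) (add_mset (w, e) M, C[i - 1 := False])"

definition lock_successful :: "lstate \<Rightarrow> bool" where
  "lock_successful S \<longleftrightarrow> ([], LCheck) \<in># fst S"

definition lock_may_state :: "lstate \<Rightarrow> bool" where
  "lock_may_state S \<longleftrightarrow> (\<exists>S'. lock_step\<^sup>*\<^sup>* S S' \<and> lock_successful S')"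

definition lock_must_state :: "lstate \<Rightarrow> bool" where
  "lock_must_state S \<longleftrightarrow> (\<forall>S'. lock_step\<^sup>*\<^sup>* S S' \<longrightarrow> lock_may_state S')"

definition lock_may :: "bool list \<Rightarrow> lproc \<Rightarrow> bool" where
  "lock_may IS P \<longleftrightarrow> lock_may_state (P, IS)"

definition lock_must :: "bool list \<Rightarrow> lproc \<Rightarrow> bool" where
  "lock_must IS P \<longleftrightarrow> lock_must_state (P, IS)"

fun tr_sub :: "lact list \<Rightarrow> lact list \<Rightarrow> ssub \<Rightarrow> lsub" where
  "tr_sub w1 w2 SZero = ([], LZero)"
| "tr_sub w1 w2 SCheck = ([], LCheck)"
| "tr_sub w1 w2 (SSend u) = (w1 @ fst (tr_sub w1 w2 u), snd (tr_sub w1 w2 u))"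
| "tr_sub w1 w2 (SRecv u) = (w2 @ fst (tr_sub w1 w2 u), snd (tr_sub w1 w2 u))"

definition tr_proc :: "lact list \<Rightarrow> lact list \<Rightarrow> sproc \<Rightarrow> lproc" where
  "tr_proc w1 w2 P = image_mset (tr_sub w1 w2) P"

text \<open>The translation given by tau(!) = w1, tau(?) = w2 into LOCKSIMPLE_{k,IS}.\<close>
definition compositional_translation :: "nat \<Rightarrow> lact list \<Rightarrow> lact list \<Rightarrow> bool" where
  "compositional_translation k w1 w2 \<longleftrightarrow> valid_word k w1 \<and> valid_word k w2"

definition correct_translation :: "bool list \<Rightarrow> lact list \<Rightarrow> lact list \<Rightarrow> bool" where
  "correct_translation IS w1 w2 \<longleftrightarrow>
     (\<forall>P. (sync_may P \<longleftrightarrow> lock_may IS (tr_proc w1 w2 P))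
        \<and> (sync_must P \<longleftrightarrow> lock_must IS (tr_proc w1 w2 P)))"

text \<open>Running a word as a single subprocess from lock configuration C:
  Some n means execution gets stuck at position n (a P_i with lock i full);
  None means the word runs to completion.\<close>
fun stuck_pos :: "bool list \<Rightarrow> lact list \<Rightarrow> nat option" where
  "stuck_pos C [] = None"
| "stuck_pos C (LP i # w) =
     (if C ! (i - 1) then Some 0 else map_option Suc (stuck_pos (C[i - 1 := True]) w))"
| "stuck_pos C (LT i # w) = map_option Suc (stuck_pos (C[i - 1 := False]) w)"

definition blocking_type_P :: "bool list \<Rightarrow> lact list \<Rightarrow> nat \<Rightarrow> bool" where
  "blocking_type_P IS S i \<longleftrightarrow>
     (\<exists>n. stuck_pos IS S = Some n \<and> n < length S \<and> S ! n = LP i \<and>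
          (\<forall>m<n. S ! m \<noteq> LP i \<and> S ! m \<noteq> LT i))"

definition blocking_type_PP :: "bool list \<Rightarrow> lact list \<Rightarrow> nat \<Rightarrow> bool" where
  "blocking_type_PP IS S i \<longleftrightarrow>
     (\<exists>n. stuck_pos IS S = Some n \<and> n < length S \<and> S ! n = LP i \<and>
          (\<exists>m<n. S ! m = LP i \<or> S ! m = LT i))"

end

theory Submission
  imports Defs
begin

fun lexec :: "bool list \<Rightarrow> lact list \<Rightarrow> bool list option" where
  "lexec C [] = Some C"
| "lexec C (LP i # w) = (if C ! (i - 1) then None else lexec (C[i - 1 := True]) w)"
| "lexec C (LT i # w) = lexec (C[i - 1 := False]) w"

fun lmaxrun :: "bool list \<Rightarrow> lact list \<Rightarrow> lact list \<times> bool list" where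
  "lmaxrun C [] = ([], C)"
| "lmaxrun C (LP i # w) = (if C ! (i - 1) then (LP i # w, C) else lmaxrun (C[i - 1 := True]) w)"
| "lmaxrun C (LT i # w) = lmaxrun (C[i - 1 := False]) w"

lemma lexec_steps:
  "lexec C p = Some C' \<Longrightarrow> lock_step\<^sup>*\<^sup>* (add_mset (p @ w, e) M, C) (add_mset (w, e) M, C')"
proof (induction C p rule: lexec.induct)
  case (1 C)
  then show ?case by simp
next
  case (2 C i p)
  then have nf: "\<not> C ! (i - 1)" and r: "lexec (C[i - 1 := True]) p = Some C'"
    by (auto split: if_splits)
  have "lock_step (add_mset (LP i # (p @ w), e) M, C) (add_mset (p @ w, e) M, C[i - 1 := True])"
    using nf by (rule lock_P)
  then show ?case using 2(1)[OF nf r] by (simp add: converse_rtranclp_into_rtranclp)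
next
  case (3 C i p)
  have "lock_step (add_mset (LT i # (p @ w), e) M, C) (add_mset (p @ w, e) M, C[i - 1 := False])"
    by (rule lock_T)
  then show ?case using 3 by (simp add: converse_rtranclp_into_rtranclp)
qed

definition reach2 :: "lact list \<Rightarrow> lact list \<Rightarrow> bool list \<Rightarrow> lact list \<Rightarrow> lact list \<Rightarrow> bool list \<Rightarrow> bool" where
  "reach2 x0 y0 C0 x y C \<longleftrightarrow> (\<forall>a b e1 e2. lock_step\<^sup>*\<^sup>* ({#(x0 @ a, e1), (y0 @ b, e2)#}, C0) ({#(x @ a, e1), (y @ b, e2)#}, C))"

lemma reach2_refl: "reach2 x y C x y C"
  by (simp add: reach2_def)

lemma reach2_trans: "reach2 x0 y0 C0 x1 y1 C1 \<Longrightarrow> reach2 x1 y1 C1 x2 y2 C2 \<Longrightarrow> reach2 x0 y0 C0 x2 y2 C2"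
  unfolding reach2_def by (meson rtranclp_trans)

lemma reach2_exec1: "lexec C p = Some C' \<Longrightarrow> reach2 (p @ x) y C x y C'"
  unfolding reach2_def
proof (intro allI)
  fix a b e1 e2
  assume "lexec C p = Some C'"
  from lexec_steps[OF this, of "x @ a" e1 "{#(y @ b, e2)#}"]
  show "lock_step\<^sup>*\<^sup>* ({#((p @ x) @ a, e1), (y @ b, e2)#}, C) ({#(x @ a, e1), (y @ b, e2)#}, C')"
    by simp
qed

lemma reach2_exec2: "lexec C p = Some C' \<Longrightarrow> reach2 x (p @ y) C x y C'"
  unfolding reach2_def
proof (intro allI)
  fix a b e1 e2
  assume "lexec C p = Some C'"
  from lexec_steps[OF this, of "y @ b" e2 "{#(x @ a, e1)#}"]
  show "lock_step\<^sup>*\<^sup>* ({#(x @ a, e1), ((p @ y) @ b, e2)#}, C) ({#(x @ a, e1), (y @ b, e2)#}, C')"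
    by (simp add: add_mset_commute)
qed

lemma lmaxrun_len: "length (fst (lmaxrun C w)) \<le> length w"
  by (induction C w rule: lmaxrun.induct) auto

lemma lmaxrun_split: "lmaxrun C w = (w', C') \<Longrightarrow> \<exists>p. w = p @ w' \<and> lexec C p = Some C'"
proof (induction C w rule: lmaxrun.induct)
  case (1 C)
  then show ?case by auto
next
  case (2 C i w)
  show ?case
  proof (cases "C ! (i - 1)")
    case True
    then show ?thesis using 2 by (intro exI[of _ "[]"]) auto
  next
    case False
    then obtain p where "w = p @ w'" "lexec (C[i - 1 := True]) p = Some C'"
      using 2 by auto
    then show ?thesis using False by (intro exI[of _ "LP i # p"]) auto
  qed
next
  case (3 C i w)
  then obtain p where "w = p @ w'" "lexec (C[i - 1 := False]) p = Some C'"
    by auto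
  then show ?case by (intro exI[of _ "LT i # p"]) auto
qed

lemma lmaxrun_stop: "lmaxrun C w = (w', C') \<Longrightarrow> w' = [] \<or> (\<exists>i v. w' = LP i # v \<and> C' ! (i - 1))"
  by (induction C w rule: lmaxrun.induct) (auto split: if_splits)

lemma lmaxrun_through:
  "length (fst (lmaxrun D (p @ x))) \<le> length x \<Longrightarrow> \<exists>Dx. lexec D p = Some Dx \<and> lmaxrun Dx x = lmaxrun D (p @ x)"
proof (induction p arbitrary: D)
  case Nil
  then show ?case by simp
next
  case (Cons a p)
  show ?case
  proof (cases a)
    case (LP i)
    show ?thesis
    proof (cases "D ! (i - 1)")
      case True
      then show ?thesis using Cons.prems LP by simp
    next
      case False
      then show ?thesis using Cons LP by auto
    qed
  next
    case (LT i)
    then show ?thesis using Cons by auto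
  qed
qed

lemma lmaxrun_noprog: assumes that: "lmaxrun C w = (w, C')" shows "C' = C"
proof (cases w)
  case Nil
  then show ?thesis using that by simp
next
  case (Cons a v)
  show ?thesis
  proof (cases a)
    case (LP i)
    show ?thesis
    proof (cases "C ! (i - 1)")
      case True
      then show ?thesis using that Cons LP by simp
    next
      case False
      then have "lmaxrun (C[i - 1 := True]) v = (w, C')" using that Cons LP by simp
      then have "length w \<le> length v" using lmaxrun_len[of "C[i - 1 := True]" v] by simp
      then show ?thesis using Cons by simp
    qed
  next
    case (LT i)
    then have "lmaxrun (C[i - 1 := False]) v = (w, C')" using that Cons by simp
    then have "length w \<le> length v" using lmaxrun_len[of "C[i - 1 := False]" v] by simp
    then show ?thesis using Cons by simp
  qed
qed

lemma lexec_length: "lexec C p = Some C' \<Longrightarrow> length C' = length C"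
  by (induction C p rule: lexec.induct) (auto split: if_splits)

lemma lmaxrun_length: "lmaxrun C w = (w', C') \<Longrightarrow> length C' = length C"
  by (induction C w rule: lmaxrun.induct) (auto split: if_splits)


lemma no_step:
  assumes "x = LP i # xv" "C ! (i - 1)" "y = LP k # yv" "C ! (k - 1)"
  shows "\<not> lock_step ({#(x, e1), (y, e2)#}, C) S'"
proof
  assume "lock_step ({#(x, e1), (y, e2)#}, C) S'"
  then show False
  proof cases
    case lock_P
    then obtain j w e M where h: "{#(x, e1), (y, e2)#} = add_mset (LP j # w, e) M" "\<not> C ! (j - 1)"
      by auto
    then have "(LP j # w, e) \<in># {#(x, e1), (y, e2)#}" by (metis h(1) union_single_eq_member)
    then show False using assms h(2) by auto
  next
    case lock_T
    then obtain j w e M where h: "{#(x, e1), (y, e2)#} = add_mset (LT j # w, e) M"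
      by auto
    then have "(LT j # w, e) \<in># {#(x, e1), (y, e2)#}" by (metis h(1) union_single_eq_member)
    then show False using assms by auto
  qed
qed

lemma dead_not_may:
  assumes "x = LP i # xv" "C ! (i - 1)" "y = LP k # yv" "C ! (k - 1)"
  shows "\<not> lock_may_state ({#(x, e1), (y, e2)#}, C)"
proof
  assume "lock_may_state ({#(x, e1), (y, e2)#}, C)"
  then obtain S' where r: "lock_step\<^sup>*\<^sup>* ({#(x, e1), (y, e2)#}, C) S'" and s: "lock_successful S'"
    unfolding lock_may_state_def by blast
  from r have "S' = ({#(x, e1), (y, e2)#}, C)"
    by (cases rule: converse_rtranclpE) (use no_step[OF assms] in blast)+
  then show False using s assms unfolding lock_successful_def by auto
qed

definition good :: "lact list \<Rightarrow> nat \<Rightarrow> lact list \<Rightarrow> bool" where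
  "good w0 i x \<longleftrightarrow> (\<forall>D. length D = 2 \<longrightarrow> length x < length (fst (lmaxrun D w0))
       \<longrightarrow> (\<exists>v. fst (lmaxrun D w0) = LP i # v))"

lemma coupling:
  assumes "valid_word 2 w" "i \<in> {1,2}" "j \<in> {1,2}" "i \<noteq> j" "length C = 2" "length D = 2"
    "lmaxrun C w = (w', C')" "w' = [] \<or> (\<exists>v. w' = LP i # v)" "C ! (j - 1) \<or> D ! (j - 1) = C ! (j - 1)"
  shows "length (fst (lmaxrun D w)) \<le> length w' \<or> (\<exists>v. fst (lmaxrun D w) = LP i # v)"
  using assms
proof (induction w arbitrary: C D)
  case Nil
  then show ?case by simp
next
  case (Cons a w)
  have vw: "valid_word 2 w" using Cons.prems(1) by (simp add: valid_word_def)
  have ka: "lidx a = i \<or> lidx a = j" using Cons.prems(1-4) by (auto simp: valid_word_def)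
  have ij: "i - 1 \<noteq> j - 1" "i - 1 < 2" "j - 1 < 2" using Cons.prems(2-4) by auto
  show ?case
  proof (cases a)
    case (LP k)
    show ?thesis
    proof (cases "k = i")
      case True
      show ?thesis
      proof (cases "C ! (i - 1)")
        case True
        then have "w' = LP i # w" using Cons.prems(7) LP \<open>k = i\<close> by simp
        then show ?thesis using lmaxrun_len[of D "a # w"] by simp
      next
        case False
        then have m: "lmaxrun (C[i - 1 := True]) w = (w', C')" using Cons.prems(7) LP \<open>k = i\<close> by simp
        show ?thesis
        proof (cases "D ! (i - 1)")
          case True
          then show ?thesis using LP \<open>k = i\<close> by simp
        next
          case False
          have rel: "C[i - 1 := True] ! (j - 1) \<or> D[i - 1 := True] ! (j - 1) = C[i - 1 := True] ! (j - 1)"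
            using Cons.prems(9) ij by simp
          have "length (fst (lmaxrun (D[i - 1 := True]) w)) \<le> length w' \<or> (\<exists>v. fst (lmaxrun (D[i - 1 := True]) w) = LP i # v)"
            using Cons.IH[OF vw Cons.prems(2-4) _ _ m Cons.prems(8) rel] Cons.prems(5,6) by simp
          then show ?thesis using False LP \<open>k = i\<close> by simp
        qed
      qed
    next
      case False
      then have kj: "k = j" using ka LP by simp
      show ?thesis
      proof (cases "C ! (j - 1)")
        case True
        then have "w' = LP j # w" using Cons.prems(7) LP kj by simp
        then show ?thesis using Cons.prems(8) Cons.prems(4) by simp
      next
        case False
        then have Df: "\<not> D ! (j - 1)" using Cons.prems(9) by simp
        have m: "lmaxrun (C[j - 1 := True]) w = (w', C')" using Cons.prems(7) LP kj False by simp
        have rel: "C[j - 1 := True] ! (j - 1) \<or> D[j - 1 := True] ! (j - 1) = C[j - 1 := True] ! (j - 1)"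
          using ij Cons.prems(5) by simp
        have "length (fst (lmaxrun (D[j - 1 := True]) w)) \<le> length w' \<or> (\<exists>v. fst (lmaxrun (D[j - 1 := True]) w) = LP i # v)"
          using Cons.IH[OF vw Cons.prems(2-4) _ _ m Cons.prems(8) rel] Cons.prems(5,6) by simp
        then show ?thesis using Df LP kj by simp
      qed
    qed
  next
    case (LT k)
    have m: "lmaxrun (C[k - 1 := False]) w = (w', C')" using Cons.prems(7) LT by simp
    have rel: "C[k - 1 := False] ! (j - 1) \<or> D[k - 1 := False] ! (j - 1) = C[k - 1 := False] ! (j - 1)"
    proof (cases "k = j")
      case True
      then show ?thesis using ij Cons.prems(5,6) by simp
    next
      case False
      then have "k - 1 \<noteq> j - 1" using ka LT ij by auto
      then show ?thesis using Cons.prems(9) by simp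
    qed
    have "length (fst (lmaxrun (D[k - 1 := False]) w)) \<le> length w' \<or> (\<exists>v. fst (lmaxrun (D[k - 1 := False]) w) = LP i # v)"
      using Cons.IH[OF vw Cons.prems(2-4) _ _ m Cons.prems(8) rel] Cons.prems(5,6) by simp
    then show ?thesis using LT by simp
  qed
qed

lemma good_init: "good w0 i w0"
  unfolding good_def using lmaxrun_len by (metis leD)

lemma good_pres:
  assumes "good w0 i x" "w0 = p @ x" "valid_word 2 w0" "i \<in> {1,2}" "j \<in> {1,2}" "i \<noteq> j"
    "length C = 2" "lmaxrun C x = (x', C')" "x' = [] \<or> (\<exists>v. x' = LP i # v)" "C ! (j - 1)"
  shows "good w0 i x'"
  unfolding good_def
proof (intro allI impI)
  fix D :: "bool list"
  assume lD: "length D = 2" and lt: "length x' < length (fst (lmaxrun D w0))"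
  show "\<exists>v. fst (lmaxrun D w0) = LP i # v"
  proof (cases "length x < length (fst (lmaxrun D w0))")
    case True
    then show ?thesis using assms(1) lD unfolding good_def by blast
  next
    case False
    then obtain Dx where ex: "lexec D p = Some Dx" and mr: "lmaxrun Dx x = lmaxrun D w0"
      using lmaxrun_through[of D p x] assms(2) by auto
    have lDx: "length Dx = 2" using lexec_length[OF ex] lD by simp
    have vx: "valid_word 2 x" using assms(2,3) by (simp add: valid_word_def)
    from coupling[OF vx assms(4-6) assms(7) lDx assms(8) assms(9)] assms(10)
    have "length (fst (lmaxrun Dx x)) \<le> length x' \<or> (\<exists>v. fst (lmaxrun Dx x) = LP i # v)" by simp
    then show ?thesis using mr lt by auto
  qed
qed


lemma stuck_maxrun: "stuck_pos C w = Some n \<Longrightarrow> fst (lmaxrun C w) = drop n w"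
  by (induction C w arbitrary: n rule: stuck_pos.induct) (auto split: if_splits)

lemma stuck_exec:
  "stuck_pos C w = Some n \<Longrightarrow> \<exists>C'. lexec C (take n w) = Some C' \<and> (\<exists>i. w ! n = LP i \<and> C' ! (i - 1))"
  by (induction C w arbitrary: n rule: stuck_pos.induct) (auto split: if_splits)

lemma lexec_untouched:
  "lexec C p = Some C' \<Longrightarrow> \<forall>a\<in>set p. lidx a \<noteq> k \<and> 1 \<le> lidx a \<Longrightarrow> 1 \<le> k \<Longrightarrow> C' ! (k - 1) = C ! (k - 1)"
proof (induction C p rule: lexec.induct)
  case (1 C)
  then show ?case by simp
next
  case (2 C i w)
  then have "i - 1 \<noteq> k - 1" by auto
  then show ?case using 2 by (auto split: if_splits)
next
  case (3 C i w)
  then have "i - 1 \<noteq> k - 1" by auto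
  then show ?case using 3 by auto
qed

definition bad :: "lact list \<Rightarrow> lact list \<Rightarrow> bool list \<Rightarrow> bool" where
  "bad w1 w2 IS \<longleftrightarrow>
     (\<exists>x y C i xv k yv. reach2 w1 w2 IS x y C \<and> x = LP i # xv \<and> C ! (i - 1) \<and> y = LP k # yv \<and> C ! (k - 1))
   \<or> (\<exists>x C C'. reach2 w1 w2 IS x [] C \<and> reach2 x w1 C x x C')
   \<or> (\<exists>x C z D i xv k zv. reach2 w1 w2 IS x [] C \<and> reach2 x w1 C x z D \<and> x = LP i # xv \<and> D ! (i - 1)
        \<and> z = LP k # zv \<and> D ! (k - 1))
   \<or> (\<exists>y C C'. reach2 w1 w2 IS [] y C \<and> reach2 w2 y C y y C')
   \<or> (\<exists>y C z D i yv k zv. reach2 w1 w2 IS [] y C \<and> reach2 w2 y C z y D \<and> z = LP k # zv \<and> D ! (k - 1)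
        \<and> y = LP i # yv \<and> D ! (i - 1))"

lemma bad_D0: "reach2 w1 w2 IS x y C \<Longrightarrow> x = LP i # xv \<Longrightarrow> C ! (i - 1) \<Longrightarrow> y = LP k # yv \<Longrightarrow> C ! (k - 1) \<Longrightarrow> bad w1 w2 IS"
  unfolding bad_def by (rule disjI1) blast

lemma bad_F1sym: "reach2 w1 w2 IS x [] C \<Longrightarrow> reach2 x w1 C x x C' \<Longrightarrow> bad w1 w2 IS"
  unfolding bad_def by (rule disjI2, rule disjI1) blast

lemma bad_F1dead: "reach2 w1 w2 IS x [] C \<Longrightarrow> reach2 x w1 C x z D \<Longrightarrow> x = LP i # xv \<Longrightarrow> D ! (i - 1)
   \<Longrightarrow> z = LP k # zv \<Longrightarrow> D ! (k - 1) \<Longrightarrow> bad w1 w2 IS"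
  unfolding bad_def by (rule disjI2, rule disjI2, rule disjI1) blast

lemma bad_F2sym: "reach2 w1 w2 IS [] y C \<Longrightarrow> reach2 w2 y C y y C' \<Longrightarrow> bad w1 w2 IS"
  unfolding bad_def by (rule disjI2, rule disjI2, rule disjI2, rule disjI1) blast

lemma bad_F2dead: "reach2 w1 w2 IS [] y C \<Longrightarrow> reach2 w2 y C z y D \<Longrightarrow> z = LP k # zv \<Longrightarrow> D ! (k - 1)
   \<Longrightarrow> y = LP i # yv \<Longrightarrow> D ! (i - 1) \<Longrightarrow> bad w1 w2 IS"
  unfolding bad_def by (rule disjI2, rule disjI2, rule disjI2, rule disjI2) blast

lemma valid_suffix_head:
  assumes "valid_word 2 w" "w = p @ LP k # v"
  shows "k = 1 \<or> k = 2"
proof -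
  have "LP k \<in> set w" using assms(2) by simp
  then show ?thesis using assms(1) unfolding valid_word_def by fastforce
qed

lemma alt:
  assumes v1: "valid_word 2 w1" and v2: "valid_word 2 w2"
  shows "reach2 w1 w2 IS x y C \<Longrightarrow> good w1 1 x \<Longrightarrow> good w2 2 y \<Longrightarrow> x = LP 1 # xv \<Longrightarrow> C ! 0
    \<Longrightarrow> length C = 2 \<Longrightarrow> w1 = px @ x \<Longrightarrow> w2 = py @ y \<Longrightarrow> bad w1 w2 IS"
proof (induction "length x + length y" arbitrary: x y C xv px py rule: less_induct)
  case less
  obtain y' C2 where m1: "lmaxrun C y = (y', C2)" by (cases "lmaxrun C y")
  obtain q1 where y_eq: "y = q1 @ y'" and e1: "lexec C q1 = Some C2"
    using lmaxrun_split[OF m1] by blast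
  have "reach2 x y C x y' C2" using reach2_exec2[OF e1, of x y'] y_eq by simp
  then have r1: "reach2 w1 w2 IS x y' C2" using reach2_trans[OF less.prems(1)] by blast
  have lC2: "length C2 = 2" using lexec_length[OF e1] less.prems(6) by simp
  from lmaxrun_stop[OF m1] show ?case
  proof
    assume y'0: "y' = []"
    obtain z D where m2: "lmaxrun C2 w1 = (z, D)" by (cases "lmaxrun C2 w1")
    show ?thesis
    proof (cases "length z \<le> length x")
      case True
      then obtain Dx where "lexec C2 px = Some Dx"
        using lmaxrun_through[of C2 px x] m2 less.prems(7) by auto
      then have "reach2 x w1 C2 x x Dx" using reach2_exec2[of C2 px Dx x x] less.prems(7) by simp
      moreover have "reach2 w1 w2 IS x [] C2" using r1 y'0 by simp
      ultimately show ?thesis by (rule bad_F1sym[rotated])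
    next
      case False
      then obtain v where zv: "z = LP 1 # v" using less.prems(2) lC2 m2 unfolding good_def by force
      have D0: "D ! 0" using lmaxrun_stop[OF m2] zv by auto
      obtain p' where "w1 = p' @ z" "lexec C2 p' = Some D" using lmaxrun_split[OF m2] by blast
      then have "reach2 x w1 C2 x z D" using reach2_exec2[of C2 p' D x z] by simp
      moreover have "reach2 w1 w2 IS x [] C2" using r1 y'0 by simp
      moreover have "D ! (1 - 1)" using D0 by simp
      ultimately show ?thesis using bad_F1dead[of w1 w2 IS x C2 z D 1 xv 1 v] zv less.prems(4) by blast
    qed
  next
    assume "\<exists>i v. y' = LP i # v \<and> C2 ! (i - 1)"
    then obtain k v where y'v: "y' = LP k # v" and Ck: "C2 ! (k - 1)" by blast
    have k12: "k = 1 \<or> k = 2" using valid_suffix_head[OF v2, of "py @ q1" k v] less.prems(8) y_eq y'v by simp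
    then show ?thesis
    proof
      assume "k = 1"
      then show ?thesis using bad_D0[OF r1 less.prems(4) _ y'v Ck] Ck by simp
    next
      assume k2: "k = 2"
      have gy': "good w2 2 y'"
        using good_pres[OF less.prems(3) less.prems(8) v2, of 1 C y' C2] less.prems(5,6) m1 y'v k2 by simp
      obtain x' C3 where m3: "lmaxrun C2 x = (x', C3)" by (cases "lmaxrun C2 x")
      obtain q2 where x_eq: "x = q2 @ x'" and e2: "lexec C2 q2 = Some C3"
        using lmaxrun_split[OF m3] by blast
      have "reach2 x y' C2 x' y' C3" using reach2_exec1[OF e2, of x' y'] x_eq by simp
      then have r2: "reach2 w1 w2 IS x' y' C3" using reach2_trans[OF r1] by blast
      have lC3: "length C3 = 2" using lexec_length[OF e2] lC2 by simp
      from lmaxrun_stop[OF m3] show ?thesis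
      proof
        assume x'0: "x' = []"
        obtain z D where m4: "lmaxrun C3 w2 = (z, D)" by (cases "lmaxrun C3 w2")
        show ?thesis
        proof (cases "length z \<le> length y'")
          case True
          then obtain Dx where "lexec C3 (py @ q1) = Some Dx"
            using lmaxrun_through[of C3 "py @ q1" y'] m4 less.prems(8) y_eq by auto
          then have "reach2 w2 y' C3 y' y' Dx"
            using reach2_exec1[of C3 "py @ q1" Dx y' y'] less.prems(8) y_eq by simp
          moreover have "reach2 w1 w2 IS [] y' C3" using r2 x'0 by simp
          ultimately show ?thesis by (rule bad_F2sym[rotated])
        next
          case False
          then obtain u where zv: "z = LP 2 # u" using gy' lC3 m4 unfolding good_def by force
          have D1: "D ! 1" using lmaxrun_stop[OF m4] zv by auto
          obtain p' where "w2 = p' @ z" "lexec C3 p' = Some D" using lmaxrun_split[OF m4] by blast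
          then have "reach2 w2 y' C3 z y' D" using reach2_exec1[of C3 p' D z y'] by simp
          moreover have "reach2 w1 w2 IS [] y' C3" using r2 x'0 by simp
          moreover have "D ! (2 - 1)" using D1 by simp
          ultimately show ?thesis using bad_F2dead[of w1 w2 IS y' C3 z D 2 u 2 v] zv y'v k2 by blast
        qed
      next
        assume "\<exists>i v. x' = LP i # v \<and> C3 ! (i - 1)"
        then obtain k' v' where x'v: "x' = LP k' # v'" and Ck': "C3 ! (k' - 1)" by blast
        have k'12: "k' = 1 \<or> k' = 2"
          using valid_suffix_head[OF v1, of "px @ q2" k' v'] less.prems(7) x_eq x'v by simp
        then show ?thesis
        proof
          assume k'2: "k' = 2"
          have "C2 ! 1" using Ck k2 by simp
          have "C3 ! 1" using Ck' k'2 by simp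
          then show ?thesis using bad_D0[OF r2 x'v _ y'v] k'2 k2 by simp
        next
          assume k'1: "k' = 1"
          have gx': "good w1 1 x'"
            using good_pres[OF less.prems(2) less.prems(7) v1, of 2 C2 x' C3] lC2 m3 x'v k'1 Ck k2 by simp
          show ?thesis
          proof (cases "length x' + length y' < length x + length y")
            case True
            show ?thesis
              using less.hyps[OF True r2 gx' gy' _ _ lC3, of v' "px @ q2" "py @ q1"] x'v k'1 Ck'
                less.prems(7,8) x_eq y_eq by simp
          next
            case False
            then have "q2 = []" using x_eq y_eq by simp
            then have "C3 = C2" using e2 by simp
            then have "C3 ! 1" using Ck k2 by simp
            then show ?thesis using bad_D0[OF r2 x'v Ck' y'v] k2 by simp
          qed
        qed
      qed
    qed
  qed
qed


lemma step_mem: "sync_step P Q \<Longrightarrow> \<exists>u1 u2 R. P = add_mset (SSend u1) (add_mset (SRecv u2) R) \<and> Q = add_mset u1 (add_mset u2 R)"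
  by (cases rule: sync_step.cases) auto

lemma sync_check_pres: "sync_step P Q \<Longrightarrow> SCheck \<in># P \<Longrightarrow> SCheck \<in># Q"
  by (auto dest!: step_mem)

lemma must_of:
  assumes st: "\<And>Q. sync_step P Q \<Longrightarrow> SCheck \<in># Q" and may: "sync_may P"
  shows "sync_must P"
  unfolding sync_must_def
proof (intro allI impI)
  fix Q assume "sync_step\<^sup>*\<^sup>* P Q"
  then have "Q = P \<or> SCheck \<in># Q"
  proof (induction rule: rtranclp_induct)
    case base
    then show ?case by simp
  next
    case (step Q Q')
    then show ?case using st sync_check_pres by blast
  qed
  then show "sync_may Q"
  proof
    assume "Q = P" then show ?thesis using may by simp
  next
    assume "SCheck \<in># Q" then show ?thesis unfolding sync_may_def sync_successful_def by blast
  qed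
qed

lemma M0: "sync_must {#SSend SCheck, SRecv SCheck#}"
proof (rule must_of)
  fix Q assume "sync_step {#SSend SCheck, SRecv SCheck#} Q"
  then obtain u1 u2 R where e: "{#SSend SCheck, SRecv SCheck#} = add_mset (SSend u1) (add_mset (SRecv u2) R)"
    and q: "Q = add_mset u1 (add_mset u2 R)" using step_mem by blast
  have "SSend u1 \<in># {#SSend SCheck, SRecv SCheck#}" using e by simp
  then have "u1 = SCheck" by simp
  then show "SCheck \<in># Q" using q by simp
next
  have "sync_step (add_mset (SSend SCheck) (add_mset (SRecv SCheck) {#})) (add_mset SCheck (add_mset SCheck {#}))"
    by (rule sync_step.intros)
  then show "sync_may {#SSend SCheck, SRecv SCheck#}"
    unfolding sync_may_def sync_successful_def by (intro exI[of _ "{#SCheck, SCheck#}"]) auto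
qed

lemma M1: "sync_must {#SSend SCheck, SRecv (SSend SZero)#}"
proof (rule must_of)
  fix Q assume "sync_step {#SSend SCheck, SRecv (SSend SZero)#} Q"
  then obtain u1 u2 R where e: "{#SSend SCheck, SRecv (SSend SZero)#} = add_mset (SSend u1) (add_mset (SRecv u2) R)"
    and q: "Q = add_mset u1 (add_mset u2 R)" using step_mem by blast
  have "SSend u1 \<in># {#SSend SCheck, SRecv (SSend SZero)#}" using e by simp
  then have "u1 = SCheck" by simp
  then show "SCheck \<in># Q" using q by simp
next
  have "sync_step (add_mset (SSend SCheck) (add_mset (SRecv (SSend SZero)) {#})) (add_mset SCheck (add_mset (SSend SZero) {#}))"
    by (rule sync_step.intros)
  then show "sync_may {#SSend SCheck, SRecv (SSend SZero)#}"
    unfolding sync_may_def sync_successful_def by (intro exI[of _ "{#SCheck, SSend SZero#}"]) auto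
qed

lemma M2: "sync_must {#SRecv SCheck, SSend (SRecv SZero)#}"
proof (rule must_of)
  fix Q assume "sync_step {#SRecv SCheck, SSend (SRecv SZero)#} Q"
  then obtain u1 u2 R where e: "{#SRecv SCheck, SSend (SRecv SZero)#} = add_mset (SSend u1) (add_mset (SRecv u2) R)"
    and q: "Q = add_mset u1 (add_mset u2 R)" using step_mem by blast
  have "SRecv u2 \<in># {#SRecv SCheck, SSend (SRecv SZero)#}" using e by (metis add_mset_commute union_single_eq_member)
  then have "u2 = SCheck" by simp
  then show "SCheck \<in># Q" using q by simp
next
  have "sync_step (add_mset (SSend (SRecv SZero)) (add_mset (SRecv SCheck) {#})) (add_mset (SRecv SZero) (add_mset SCheck {#}))"
    by (rule sync_step.intros)
  then show "sync_may {#SRecv SCheck, SSend (SRecv SZero)#}"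
    unfolding sync_may_def sync_successful_def
    by (intro exI[of _ "{#SRecv SZero, SCheck#}"]) (auto simp: add_mset_commute)
qed

lemma N1: "\<not> sync_may {#SSend SZero, SRecv (SSend SCheck)#}"
proof -
  have inv: "Q = {#SSend SZero, SRecv (SSend SCheck)#} \<or> Q = {#SZero, SSend SCheck#}"
    if "sync_step\<^sup>*\<^sup>* {#SSend SZero, SRecv (SSend SCheck)#} Q" for Q
    using that
  proof (induction rule: rtranclp_induct)
    case base
    then show ?case by simp
  next
    case (step Q Q')
    then obtain u1 u2 R where e: "Q = add_mset (SSend u1) (add_mset (SRecv u2) R)"
      and q: "Q' = add_mset u1 (add_mset u2 R)" using step_mem by blast
    from step.IH show ?case
    proof
      assume Q0: "Q = {#SSend SZero, SRecv (SSend SCheck)#}"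
      have "SSend u1 \<in># Q" using e by simp
      then have u1: "u1 = SZero" using Q0 by simp
      have "SRecv u2 \<in># Q" using e by simp
      then have u2: "u2 = SSend SCheck" using Q0 by simp
      have "R = {#}" using e Q0 u1 u2 by simp
      then show ?case using q u1 u2 by simp
    next
      assume Q1: "Q = {#SZero, SSend SCheck#}"
      have "SRecv u2 \<in># Q" using e by simp
      then show ?case using Q1 by simp
    qed
  qed
  show ?thesis unfolding sync_may_def sync_successful_def using inv by fastforce
qed

lemma N2: "\<not> sync_may {#SRecv SZero, SSend (SRecv SCheck)#}"
proof -
  have inv: "Q = {#SRecv SZero, SSend (SRecv SCheck)#} \<or> Q = {#SRecv SCheck, SZero#}"
    if "sync_step\<^sup>*\<^sup>* {#SRecv SZero, SSend (SRecv SCheck)#} Q" for Q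
    using that
  proof (induction rule: rtranclp_induct)
    case base
    then show ?case by simp
  next
    case (step Q Q')
    then obtain u1 u2 R where e: "Q = add_mset (SSend u1) (add_mset (SRecv u2) R)"
      and q: "Q' = add_mset u1 (add_mset u2 R)" using step_mem by blast
    from step.IH show ?case
    proof
      assume Q0: "Q = {#SRecv SZero, SSend (SRecv SCheck)#}"
      have "SSend u1 \<in># Q" using e by simp
      then have u1: "u1 = SRecv SCheck" using Q0 by simp
      have "SRecv u2 \<in># Q" using e by simp
      then have u2: "u2 = SZero" using Q0 by simp
      have "R = {#}" using e Q0 u1 u2 by (simp add: add_mset_commute)
      then show ?case using q u1 u2 by simp
    next
      assume Q1: "Q = {#SRecv SCheck, SZero#}"
      have "SSend u1 \<in># Q" using e by simp
      then show ?case using Q1 by simp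
    qed
  qed
  show ?thesis unfolding sync_may_def sync_successful_def using inv by fastforce
qed


lemma reach2D: "reach2 x0 y0 C0 x y C \<Longrightarrow> lock_step\<^sup>*\<^sup>* ({#(x0 @ a, e1), (y0 @ b, e2)#}, C0) ({#(x @ a, e1), (y @ b, e2)#}, C)"
  by (simp add: reach2_def)

lemma may_via: "lock_step\<^sup>*\<^sup>* S T \<Longrightarrow> lock_may_state T \<Longrightarrow> lock_may_state S"
  unfolding lock_may_state_def by (meson rtranclp_trans)

lemma must_reach: "lock_must_state S \<Longrightarrow> lock_step\<^sup>*\<^sup>* S T \<Longrightarrow> lock_may_state T"
  unfolding lock_must_state_def by blast

theorem proposition5p16:
  fixes IS :: "bool list"
  assumes "length IS = 2"
  shows "\<not> (\<exists>w1 w2. compositional_translation 2 w1 w2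
              \<and> correct_translation IS w1 w2
              \<and> blocking_type_P IS w1 1 \<and> blocking_type_P IS w2 2)"
proof
  assume "\<exists>w1 w2. compositional_translation 2 w1 w2
              \<and> correct_translation IS w1 w2
              \<and> blocking_type_P IS w1 1 \<and> blocking_type_P IS w2 2"
  then obtain w1 w2 where ct: "compositional_translation 2 w1 w2" and cor: "correct_translation IS w1 w2"
    and b1: "blocking_type_P IS w1 1" and b2: "blocking_type_P IS w2 2" by blast
  have v1: "valid_word 2 w1" and v2: "valid_word 2 w2" using ct unfolding compositional_translation_def by auto
  have corP: "\<And>P. (sync_may P \<longleftrightarrow> lock_may IS (tr_proc w1 w2 P)) \<and> (sync_must P \<longleftrightarrow> lock_must IS (tr_proc w1 w2 P))"
    using cor unfolding correct_translation_def by blast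
  obtain m where sm: "stuck_pos IS w2 = Some m" and m2: "w2 ! m = LP 2"
    and mb: "\<forall>k<m. w2 ! k \<noteq> LP 2 \<and> w2 ! k \<noteq> LT 2"
    using b2 unfolding blocking_type_P_def by blast
  obtain C' i where ex2: "lexec IS (take m w2) = Some C'" and wi: "w2 ! m = LP i" and Ci: "C' ! (i - 1)"
    using stuck_exec[OF sm] by blast
  have "i = 2" using wi m2 by simp
  have untouched: "\<forall>a\<in>set (take m w2). lidx a \<noteq> 2 \<and> 1 \<le> lidx a"
  proof
    fix a assume a: "a \<in> set (take m w2)"
    then obtain k where k: "k < m" "k < length w2" "a = w2 ! k" by (auto simp: in_set_conv_nth)
    have na: "a \<noteq> LP 2" "a \<noteq> LT 2" using mb k by auto
    have "a \<in> set w2" using k by simp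
    then have "1 \<le> lidx a \<and> lidx a \<le> 2" using v2 by (simp add: valid_word_def)
    moreover have "lidx a \<noteq> 2" using na by (cases a) auto
    ultimately show "lidx a \<noteq> 2 \<and> 1 \<le> lidx a" by simp
  qed
  have "C' ! (2 - 1) = IS ! (2 - 1)" using lexec_untouched[OF ex2 untouched] by simp
  then have IS1: "IS ! 1" using Ci \<open>i = 2\<close> by simp
  obtain n where sn: "stuck_pos IS w1 = Some n" and nl: "n < length w1" and n1: "w1 ! n = LP 1"
    using b1 unfolding blocking_type_P_def by blast
  obtain x1 C1 where mr: "lmaxrun IS w1 = (x1, C1)" by (cases "lmaxrun IS w1")
  have "x1 = drop n w1" using stuck_maxrun[OF sn] mr by simp
  then have x1v: "x1 = LP 1 # drop (Suc n) w1" using Cons_nth_drop_Suc[OF nl] n1 by simp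
  have C10: "C1 ! 0" using lmaxrun_stop[OF mr] x1v by auto
  have lC1: "length C1 = 2" using lmaxrun_length[OF mr] assms by simp
  have g1: "good w1 1 x1"
    using good_pres[OF good_init[of w1 1] _ v1, of "[]" 2 IS x1 C1] assms mr x1v IS1 by simp
  obtain p1 where w1eq: "w1 = p1 @ x1" and e1: "lexec IS p1 = Some C1" using lmaxrun_split[OF mr] by blast
  have r0: "reach2 w1 w2 IS x1 w2 C1" using reach2_exec1[OF e1, of x1 w2] w1eq by simp
  have "bad w1 w2 IS"
    using alt[OF v1 v2 r0 g1 good_init x1v C10 lC1 w1eq, of "[]"] by simp
  have t0: "tr_proc w1 w2 {#SSend SCheck, SRecv SCheck#} = {#(w1, LCheck), (w2, LCheck)#}"
    by (simp add: tr_proc_def)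
  have t1: "tr_proc w1 w2 {#SSend SCheck, SRecv (SSend SZero)#} = {#(w1, LCheck), (w2 @ w1, LZero)#}"
    by (simp add: tr_proc_def)
  have t1n: "tr_proc w1 w2 {#SSend SZero, SRecv (SSend SCheck)#} = {#(w1, LZero), (w2 @ w1, LCheck)#}"
    by (simp add: tr_proc_def)
  have t2: "tr_proc w1 w2 {#SRecv SCheck, SSend (SRecv SZero)#} = {#(w1 @ w2, LZero), (w2, LCheck)#}"
    by (simp add: tr_proc_def add_mset_commute)
  have t2n: "tr_proc w1 w2 {#SRecv SZero, SSend (SRecv SCheck)#} = {#(w1 @ w2, LCheck), (w2, LZero)#}"
    by (simp add: tr_proc_def add_mset_commute)
  have L0: "lock_must_state ({#(w1, LCheck), (w2, LCheck)#}, IS)"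
    using corP[of "{#SSend SCheck, SRecv SCheck#}"] M0 t0 unfolding lock_must_def by simp
  have L1: "lock_must_state ({#(w1, LCheck), (w2 @ w1, LZero)#}, IS)"
    using corP[of "{#SSend SCheck, SRecv (SSend SZero)#}"] M1 t1 unfolding lock_must_def by simp
  have L1n: "\<not> lock_may_state ({#(w1, LZero), (w2 @ w1, LCheck)#}, IS)"
    using corP[of "{#SSend SZero, SRecv (SSend SCheck)#}"] N1 t1n unfolding lock_may_def by simp
  have L2: "lock_must_state ({#(w1 @ w2, LZero), (w2, LCheck)#}, IS)"
    using corP[of "{#SRecv SCheck, SSend (SRecv SZero)#}"] M2 t2 unfolding lock_must_def by simp
  have L2n: "\<not> lock_may_state ({#(w1 @ w2, LCheck), (w2, LZero)#}, IS)"
    using corP[of "{#SRecv SZero, SSend (SRecv SCheck)#}"] N2 t2n unfolding lock_may_def by simp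
  from \<open>bad w1 w2 IS\<close> show False
    unfolding bad_def
  proof (elim disjE exE conjE)
    fix x y C i xv k yv
    assume r: "reach2 w1 w2 IS x y C" and d: "x = LP i # xv" "C ! (i - 1)" "y = LP k # yv" "C ! (k - 1)"
    have "lock_step\<^sup>*\<^sup>* ({#(w1, LCheck), (w2, LCheck)#}, IS) ({#(x, LCheck), (y, LCheck)#}, C)"
      using reach2D[OF r, of "[]" LCheck "[]" LCheck] by simp
    then have "lock_may_state ({#(x, LCheck), (y, LCheck)#}, C)" using must_reach[OF L0] by blast
    then show False using dead_not_may[OF d] by blast
  next
    fix x C C'
    assume ra: "reach2 w1 w2 IS x [] C" and rb: "reach2 x w1 C x x C'"
    have s1: "lock_step\<^sup>*\<^sup>* ({#(w1, e1), (w2 @ w1, e2)#}, IS) ({#(x, e1), (w1, e2)#}, C)" for e1 e2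
      using reach2D[OF ra, of "[]" e1 w1 e2] by simp
    have s2: "lock_step\<^sup>*\<^sup>* ({#(x, e1), (w1, e2)#}, C) ({#(x, e1), (x, e2)#}, C')" for e1 e2
      using reach2D[OF rb, of "[]" e1 "[]" e2] by simp
    have "lock_may_state ({#(x, LCheck), (x, LZero)#}, C')"
      using must_reach[OF L1 rtranclp_trans[OF s1 s2]] by blast
    then have "lock_may_state ({#(x, LZero), (x, LCheck)#}, C')" by (simp add: add_mset_commute)
    then have "lock_may_state ({#(w1, LZero), (w2 @ w1, LCheck)#}, IS)"
      using may_via[OF rtranclp_trans[OF s1 s2]] by blast
    then show False using L1n by blast
  next
    fix x C z D i xv k zv
    assume ra: "reach2 w1 w2 IS x [] C" and rb: "reach2 x w1 C x z D"
      and d: "x = LP i # xv" "D ! (i - 1)" "z = LP k # zv" "D ! (k - 1)"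
    have s1: "lock_step\<^sup>*\<^sup>* ({#(w1, LCheck), (w2 @ w1, LZero)#}, IS) ({#(x, LCheck), (w1, LZero)#}, C)"
      using reach2D[OF ra, of "[]" LCheck w1 LZero] by simp
    have s2: "lock_step\<^sup>*\<^sup>* ({#(x, LCheck), (w1, LZero)#}, C) ({#(x, LCheck), (z, LZero)#}, D)"
      using reach2D[OF rb, of "[]" LCheck "[]" LZero] by simp
    have "lock_may_state ({#(x, LCheck), (z, LZero)#}, D)"
      using must_reach[OF L1 rtranclp_trans[OF s1 s2]] by blast
    then show False using dead_not_may[OF d] by blast
  next
    fix y C C'
    assume ra: "reach2 w1 w2 IS [] y C" and rb: "reach2 w2 y C y y C'"
    have s1: "lock_step\<^sup>*\<^sup>* ({#(w1 @ w2, e1), (w2, e2)#}, IS) ({#(w2, e1), (y, e2)#}, C)" for e1 e2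
      using reach2D[OF ra, of w2 e1 "[]" e2] by simp
    have s2: "lock_step\<^sup>*\<^sup>* ({#(w2, e1), (y, e2)#}, C) ({#(y, e1), (y, e2)#}, C')" for e1 e2
      using reach2D[OF rb, of "[]" e1 "[]" e2] by simp
    have "lock_may_state ({#(y, LZero), (y, LCheck)#}, C')"
      using must_reach[OF L2 rtranclp_trans[OF s1 s2]] by blast
    then have "lock_may_state ({#(y, LCheck), (y, LZero)#}, C')" by (simp add: add_mset_commute)
    then have "lock_may_state ({#(w1 @ w2, LCheck), (w2, LZero)#}, IS)"
      using may_via[OF rtranclp_trans[OF s1 s2]] by blast
    then show False using L2n by blast
  next
    fix y C z D i yv k zv
    assume ra: "reach2 w1 w2 IS [] y C" and rb: "reach2 w2 y C z y D"
      and d: "z = LP k # zv" "D ! (k - 1)" "y = LP i # yv" "D ! (i - 1)"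
    have s1: "lock_step\<^sup>*\<^sup>* ({#(w1 @ w2, LZero), (w2, LCheck)#}, IS) ({#(w2, LZero), (y, LCheck)#}, C)"
      using reach2D[OF ra, of w2 LZero "[]" LCheck] by simp
    have s2: "lock_step\<^sup>*\<^sup>* ({#(w2, LZero), (y, LCheck)#}, C) ({#(z, LZero), (y, LCheck)#}, D)"
      using reach2D[OF rb, of "[]" LZero "[]" LCheck] by simp
    have "lock_may_state ({#(z, LZero), (y, LCheck)#}, D)"
      using must_reach[OF L2 rtranclp_trans[OF s1 s2]] by blast
    then show False using dead_not_may[OF d] by blast
  qed
qed

end
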